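(* Let $G$ be a simple graph of order $n$ with adjacency eigenvalues $\lambda_1,\lambda_2,\dots,\lambda_n$ (listed with multiplicity), and let $G^l$ be the graph obtained from $G$ by adding a loop on each vertex of $G$. Let $p$ and $q$ be non-negative integers with $m=p+q\ge 1$, and let $(pG\cup qG^l)_{qn}$ denote the disjoint union of $p$ copies of $G$ and $q$ copies of $G^l$, a graph of order $mn$ with exactly $qn$ self-loops. If $|\lambda_i|\ge \max\left(\frac{p}{m},\frac{q}{m}\right)$ for each $i=1,2,\dots,n$, then $E\big((pG\cup qG^l)_{qn}\big)=mE(G)$.
   Context: For a simple graph $G$ with adjacency matrix $A(G)$ and eigenvalues $\lambda_1,\dots,\lambda_n$, the energy is $E(G)=\sum_{i=1}^n|\lambda_i|$. For a graph $G_\sigma$ of order $N$ obtained from a simple graph by attaching self-loops on $\sigma$ of its vertices, the adjacency matrix is $A(G_\sigma)=A(G)+I_\sigma$, where $I_\sigma$ is the $N\times N$ diagonal matrix with exactly $\sigma$ ones on the diagonal (at the looped vertices) and zeros elsewhere; if $\mu_1,\dots,\mu_N$ are the eigenvalues of $A(G_\sigma)$, its energy is $E(G_\sigma)=\sum_{i=1}^N\left|\mu_i-\frac{\sigma}{N}\right|$. The subscript in $(pG\cup qG^l)_{qn}$ indicates the number of loops $\sigma=qn$. *)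

theory Defs
  imports Complex_Main "Jordan_Normal_Form.Char_Poly" "HOL-Computational_Algebra.Polynomial"
begin

definition simple_graph_adj :: "nat \<Rightarrow> real mat \<Rightarrow> bool" where
  "simple_graph_adj n A \<longleftrightarrow> A \<in> carrier_mat n n \<and>
     (\<forall>i<n. \<forall>j<n. A $$ (i,j) = 0 \<or> A $$ (i,j) = 1) \<and>
     (\<forall>i<n. A $$ (i,i) = 0) \<and>
     (\<forall>i<n. \<forall>j<n. A $$ (i,j) = A $$ (j,i))"

definition eigvals :: "real mat \<Rightarrow> complex multiset" where
  "eigvals A = proots (map_poly complex_of_real (char_poly A))"

definition graph_energy :: "real mat \<Rightarrow> real" where
  "graph_energy A = sum_mset (image_mset cmod (eigvals A))"

text \<open>Energy of a graph with sigma self-loops, order N = dim_row M.\<close>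
definition loop_energy :: "real mat \<Rightarrow> nat \<Rightarrow> real" where
  "loop_energy M \<sigma> = sum_mset (image_mset (\<lambda>\<mu>. cmod (\<mu> - complex_of_real (real \<sigma> / real (dim_row M)))) (eigvals M))"

definition add_loops :: "real mat \<Rightarrow> real mat" where
  "add_loops A = A + 1\<^sub>m (dim_row A)"

text \<open>Adjacency matrix of a disjoint union: block diagonal matrix.\<close>
fun block_diag :: "real mat list \<Rightarrow> real mat" where
  "block_diag [] = 0\<^sub>m 0 0"
| "block_diag (B # Bs) = (let R = block_diag Bs in
     four_block_mat B (0\<^sub>m (dim_row B) (dim_col R)) (0\<^sub>m (dim_row R) (dim_col B)) R)"

definition union_pG_qGl :: "nat \<Rightarrow> nat \<Rightarrow> real mat \<Rightarrow> real mat" where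
  "union_pG_qGl p q A = block_diag (replicate p A @ replicate q (add_loops A))"

end

theory Submission
  imports Defs
begin

lemma char_poly_block2:
  fixes B C :: "'a :: idom mat"
  assumes B: "B \<in> carrier_mat k k" and C: "C \<in> carrier_mat l l"
  shows "char_poly (four_block_mat B (0\<^sub>m k l) (0\<^sub>m l k) C) = char_poly B * char_poly C"
proof -
  let ?cm = "\<lambda> A. [:0, 1:] \<cdot>\<^sub>m 1\<^sub>m (dim_row A) + map_mat (\<lambda>a. [:- a:]) A"
  have "char_poly (four_block_mat B (0\<^sub>m k l) (0\<^sub>m l k) C) = det (?cm (four_block_mat B (0\<^sub>m k l) (0\<^sub>m l k) C))"
    unfolding char_poly_defs using B C by simp
  also have "?cm (four_block_mat B (0\<^sub>m k l) (0\<^sub>m l k) C) = four_block_mat (?cm B) (0\<^sub>m k l) (0\<^sub>m l k) (?cm C)"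
    by (rule eq_matI, insert B C, auto)
  also have "det \<dots> = det (?cm B) * det (?cm C)"
    by (rule det_four_block_mat_lower_left_zero[OF _ _ refl], insert B C, auto)
  also have "\<dots> = char_poly B * char_poly C" unfolding char_poly_defs ..
  finally show ?thesis .
qed

lemma block_diag_props:
  assumes "\<forall>B\<in>set Bs. B \<in> carrier_mat n n"
  shows "block_diag Bs \<in> carrier_mat (length Bs * n) (length Bs * n) \<and>
         char_poly (block_diag Bs) = prod_list (map char_poly Bs)"
  using assms
proof (induction Bs)
  case Nil
  then show ?case by (simp add: char_poly_defs)
next
  case (Cons B Bs)
  then have B: "B \<in> carrier_mat n n" and R: "block_diag Bs \<in> carrier_mat (length Bs * n) (length Bs * n)"
    and cp: "char_poly (block_diag Bs) = prod_list (map char_poly Bs)" by auto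
  have "block_diag (B # Bs) = four_block_mat B (0\<^sub>m n (length Bs * n)) (0\<^sub>m (length Bs * n) n) (block_diag Bs)"
    using B R by (simp add: Let_def)
  then show ?case using char_poly_block2[OF B R] B R cp by simp
qed

lemma char_poly_shift:
  fixes A :: "real mat"
  assumes A: "A \<in> carrier_mat n n"
  shows "char_poly (A + 1\<^sub>m n) = pcompose (char_poly A) [:-1,1:]"
proof -
  have "poly (char_poly (A + 1\<^sub>m n)) k = poly (pcompose (char_poly A) [:-1,1:]) k" for k
  proof -
    have AI: "A + 1\<^sub>m n \<in> carrier_mat n n" using A by simp
    have "char_matrix (A + 1\<^sub>m n) k = char_matrix A (k - 1)"
      by (rule eq_matI, insert A, auto simp: char_matrix_def)
    then show ?thesis
      unfolding char_poly_matrix[OF AI] char_poly_matrix[OF A] poly_pcompose by simp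
  qed
  then show ?thesis using poly_eq_poly_eq_iff by blast
qed

lemma sym_real_root:
  fixes A :: "real mat"
  assumes A: "A \<in> carrier_mat n n" and sym: "\<forall>i<n. \<forall>j<n. A $$ (i,j) = A $$ (j,i)"
    and z: "poly (map_poly complex_of_real (char_poly A)) z = 0"
  shows "Im z = 0"
proof -
  let ?B = "map_mat complex_of_real A"
  have Bc: "?B \<in> carrier_mat n n" using A by simp
  have "poly (char_poly ?B) z = 0" unfolding of_real_hom.char_poly_hom[OF A] by (rule z)
  then have "eigenvalue ?B z" using eigenvalue_root_char_poly[OF Bc] by simp
  then obtain v where ev: "eigenvector ?B v z" unfolding eigenvalue_def by blast
  then have v: "v \<in> carrier_vec n" "v \<noteq> 0\<^sub>v n" "?B *\<^sub>v v = z \<cdot>\<^sub>v v"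
    unfolding eigenvector_def using A by auto
  have row: "(\<Sum>j<n. complex_of_real (A $$ (i,j)) * v $ j) = z * v $ i" if "i < n" for i
  proof -
    have "(?B *\<^sub>v v) $ i = z * v $ i" using v(3) v(1) that by simp
    moreover have "(?B *\<^sub>v v) $ i = (\<Sum>j<n. complex_of_real (A $$ (i,j)) * v $ j)"
      using that A v(1) by (auto simp: scalar_prod_def lessThan_atLeast0 intro!: sum.cong)
    ultimately show ?thesis by simp
  qed
  define s where "s = (\<Sum>i<n. cnj (v $ i) * (\<Sum>j<n. complex_of_real (A $$ (i,j)) * v $ j))"
  define N where "N = (\<Sum>i<n. cnj (v $ i) * v $ i)"
  have sN: "s = z * N" unfolding s_def N_def using row
    by (auto simp: sum_distrib_left algebra_simps intro!: sum.cong)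
  have "cnj s = (\<Sum>i<n. \<Sum>j<n. v $ i * (complex_of_real (A $$ (i,j)) * cnj (v $ j)))"
    unfolding s_def by (simp add: sum_distrib_left)
  also have "\<dots> = (\<Sum>j<n. \<Sum>i<n. v $ i * (complex_of_real (A $$ (i,j)) * cnj (v $ j)))"
    by (rule sum.swap)
  also have "\<dots> = s" unfolding s_def sum_distrib_left
    using sym by (auto intro!: sum.cong simp: algebra_simps)
  finally have "Im (cnj s) = Im s" by simp
  then have "Im s = 0" by simp
  have Nr: "N = complex_of_real (\<Sum>i<n. (cmod (v $ i))^2)"
    unfolding N_def of_real_sum by (intro sum.cong refl) (subst complex_norm_square, rule mult.commute)
  obtain i where i: "i < n" "v $ i \<noteq> 0" using v(1,2) by (metis eq_vecI carrier_vecD index_zero_vec)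
  have pos: "(\<Sum>i<n. (cmod (v $ i))^2) > 0"
    by (rule sum_pos2[of _ i], insert i, auto)
  have "N \<noteq> 0" unfolding Nr using pos by (metis less_irrefl of_real_eq_0_iff)
  have "Im N = 0" unfolding Nr by (rule Im_complex_of_real)
  have "z = s / N" using sN \<open>N \<noteq> 0\<close> by simp
  then show ?thesis using \<open>Im s = 0\<close> \<open>Im N = 0\<close> by (simp add: Im_divide)
qed
lemma proots_linear_prod: "proots (\<Prod>a\<leftarrow>as. [:-a,1:]) = mset (as :: complex list)"
proof (induction as)
  case Nil then show ?case by simp
next
  case (Cons a as)
  have "(\<Prod>a\<leftarrow>as. [:-a,1:]) \<noteq> (0 :: complex poly)" by (auto simp: prod_list_zero_iff)
  have l: "[:-a,1:] \<noteq> (0 :: complex poly)" by simp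
  have "proots (\<Prod>b\<leftarrow>a#as. [:-b,1:]) = proots ([:-a,1:] * (\<Prod>b\<leftarrow>as. [:-b,1:]))"
    by (simp only: list.map prod_list.Cons)
  also have "\<dots> = proots [:-a,1:] + proots (\<Prod>b\<leftarrow>as. [:-b,1:])"
    by (rule proots_mult[OF l \<open>(\<Prod>a\<leftarrow>as. [:-a,1:]) \<noteq> 0\<close>])
  finally show ?case using Cons by simp
qed

lemma poly_linear_prod: "poly (\<Prod>a\<leftarrow>as. [:-a,1:]) x = (\<Prod>a\<leftarrow>as. x - (a::complex))"
  by (induction as) (auto simp: algebra_simps)

lemma pcomp_shift: "(\<Prod>a\<leftarrow>as. [:-a,1:]) \<circ>\<^sub>p [:-1,1:] = (\<Prod>a\<leftarrow>as. [:-(a+1),1:] :: complex poly)"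
proof (induction as)
  case Nil then show ?case by (simp add: pcompose_1)
next
  case (Cons a as)
  have l: "[:-a,1:] \<circ>\<^sub>p [:-1,1:] = [:-(a+1),1::complex:]" by (simp add: pcompose_pCons)
  have "(\<Prod>b\<leftarrow>a#as. [:-b,1:]) \<circ>\<^sub>p [:-1,1:] = ([:-a,1:] * (\<Prod>b\<leftarrow>as. [:-b,1:])) \<circ>\<^sub>p [:-1,1::complex:]"
    by (simp only: list.map prod_list.Cons)
  also have "\<dots> = [:-(a+1),1:] * (\<Prod>b\<leftarrow>as. [:-(b+1),1:])"
    by (simp only: pcompose_mult l Cons.IH)
  also have "\<dots> = (\<Prod>b\<leftarrow>a#as. [:-(b+1),1:])"
    by (simp only: list.map prod_list.Cons)
  finally show ?case .
qed

lemma aux: "(x::real) + of_nat k * x = of_nat (Suc k) * x" by (simp add: algebra_simps)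

lemma sum_repeat: "sum_mset (image_mset f (repeat_mset k X)) = of_nat k * sum_mset (image_mset f X :: real multiset)"
proof (induction k)
  case 0 then show ?case by simp
next
  case (Suc k)
  have "sum_mset (image_mset f (repeat_mset (Suc k) X)) = sum_mset (image_mset f X) + sum_mset (image_mset f (repeat_mset k X))"
    by simp
  also have "\<dots> = sum_mset (image_mset f X) + of_nat k * sum_mset (image_mset f X)" using Suc.IH by simp
  also have "\<dots> = of_nat (Suc k) * sum_mset (image_mset f X)"
    using aux[of "sum_mset (image_mset f X)" k] .
  finally show ?case .
qed

lemma key:
  fixes r :: real and p q :: nat
  assumes "p + q \<ge> 1" "\<bar>r\<bar> \<ge> max (real p / real (p + q)) (real q / real (p + q))"
  shows "real p * \<bar>r - real q / real (p+q)\<bar> + real q * \<bar>r + 1 - real q / real (p+q)\<bar> = real (p+q) * \<bar>r\<bar>"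
proof -
  define m where "m = real (p+q)"
  have m: "m > 0" using assms(1) unfolding m_def by simp
  have pm: "1 - real q / m = real p / m" using m unfolding m_def by (simp add: field_simps)
  have e: "real p * (real q / m) = real q * (real p / m)" by simp
  have sp: "real p + real q = m" unfolding m_def by simp
  have goal: "real p * \<bar>r - real q / m\<bar> + real q * \<bar>r + 1 - real q / m\<bar> = m * \<bar>r\<bar>"
  proof (cases "r \<ge> 0")
    case True
    then have "r \<ge> real q / m" using assms(2) unfolding m_def by auto
    moreover have "real p / m \<ge> 0" using m by simp
    ultimately have a: "\<bar>r - real q / m\<bar> = r - real q / m" "\<bar>r + 1 - real q / m\<bar> = r + real p / m"
      using pm by auto
    have "real p * (r - real q / m) + real q * (r + real p / m) = m * r"
      unfolding sp[symmetric] by (simp add: algebra_simps)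
    then show ?thesis unfolding a abs_of_nonneg[OF True] .
  next
    case False
    then have "r \<le> - (real p / m)" using assms(2) unfolding m_def by auto
    moreover have "real q / m \<ge> 0" using m by simp
    ultimately have a: "\<bar>r - real q / m\<bar> = real q / m - r" "\<bar>r + 1 - real q / m\<bar> = - r - real p / m"
      using pm by auto
    have "real p * (real q / m - r) + real q * (- r - real p / m) = m * (- r)"
      unfolding sp[symmetric] by (simp add: algebra_simps)
    then show ?thesis unfolding a abs_of_neg[OF False[unfolded not_le]] .
  qed
  then show ?thesis unfolding m_def .
qed
theorem theorem2:
  fixes n p q :: nat and A :: "real mat"
  assumes "simple_graph_adj n A"
    and "p + q \<ge> 1"
    and "\<forall>ev\<in>#eigvals A. cmod ev \<ge> max (real p / real (p + q)) (real q / real (p + q))"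
  shows "loop_energy (union_pG_qGl p q A) (q * n) = real (p + q) * graph_energy A"
proof -
  have A: "A \<in> carrier_mat n n" and sym: "\<forall>i<n. \<forall>j<n. A $$ (i,j) = A $$ (j,i)"
    using assms(1) unfolding simple_graph_adj_def by auto
  have Bc: "map_mat complex_of_real A \<in> carrier_mat n n" using A by simp
  obtain as where fac: "char_poly (map_mat complex_of_real A) = (\<Prod>a\<leftarrow>as. [:- a, 1:])"
    and len: "length as = n"
    using char_poly_factorized[OF Bc] by blast
  define Pc where "Pc = (\<Prod>a\<leftarrow>as. [:- a, 1:])"
  have Pc: "map_poly complex_of_real (char_poly A) = Pc"
    using fac unfolding of_real_hom.char_poly_hom[OF A] Pc_def .
  have eig: "eigvals A = mset as" unfolding eigvals_def Pc Pc_def by (rule proots_linear_prod)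
  have real: "Im a = 0" if "a \<in> set as" for a
  proof (rule sym_real_root[OF A sym])
    show "poly (map_poly complex_of_real (char_poly A)) a = 0"
      unfolding Pc Pc_def poly_linear_prod using that by (auto simp: prod_list_zero_iff)
  qed
  define Bs where "Bs = replicate p A @ replicate q (A + 1\<^sub>m n)"
  have M: "union_pG_qGl p q A = block_diag Bs"
    unfolding union_pG_qGl_def Bs_def add_loops_def using A by simp
  have Bsc: "\<forall>B\<in>set Bs. B \<in> carrier_mat n n" unfolding Bs_def using A by auto
  note bd = block_diag_props[OF Bsc]
  have lenBs: "length Bs = p + q" unfolding Bs_def by simp
  have dimM: "dim_row (union_pG_qGl p q A) = (p + q) * n" using bd M lenBs by auto
  have cpM: "char_poly (union_pG_qGl p q A) = char_poly A ^ p * (char_poly A \<circ>\<^sub>p [:-1,1:]) ^ q"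
    using bd unfolding M Bs_def by (simp add: char_poly_shift[OF A])
  have Pnz: "Pc \<noteq> 0" unfolding Pc_def by (auto simp: prod_list_zero_iff)
  have Qnz: "Pc \<circ>\<^sub>p [:-1,1:] \<noteq> 0" unfolding Pc_def pcomp_shift by (auto simp: prod_list_zero_iff)
  have "map_poly complex_of_real (char_poly (union_pG_qGl p q A)) = Pc ^ p * (Pc \<circ>\<^sub>p [:-1,1:]) ^ q"
  proof -
    interpret mh: map_poly_comm_ring_hom "of_real :: real \<Rightarrow> complex" ..
    have l: "map_poly complex_of_real [:-1,1:] = [:-1,1:]"
      unfolding of_real_hom.map_poly_pCons_hom by simp
    show ?thesis
      unfolding cpM mh.hom_mult mh.hom_power of_real_hom.map_poly_pcompose Pc l ..
  qed
  then have eM: "eigvals (union_pG_qGl p q A) = repeat_mset p (mset as) + repeat_mset q (mset (map (\<lambda>a. a + 1) as))"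
  proof -
    assume h: "map_poly complex_of_real (char_poly (union_pG_qGl p q A)) = Pc ^ p * (Pc \<circ>\<^sub>p [:-1,1:]) ^ q"
    have r1: "proots Pc = mset as" unfolding Pc_def by (rule proots_linear_prod)
    have r2: "proots (Pc \<circ>\<^sub>p [:-1,1:]) = mset (map (\<lambda>a. a + 1) as)"
      unfolding Pc_def pcomp_shift using proots_linear_prod[of "map (\<lambda>a. a + 1) as"] by (simp add: o_def)
    have "Pc ^ p \<noteq> 0" "(Pc \<circ>\<^sub>p [:-1,1:]) ^ q \<noteq> 0" using Pnz Qnz by auto
    then show ?thesis unfolding eigvals_def h proots_mult[OF \<open>Pc ^ p \<noteq> 0\<close> \<open>(Pc \<circ>\<^sub>p [:-1,1:]) ^ q \<noteq> 0\<close>]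
      proots_power r1 r2 by simp
  qed
  define c where "c = complex_of_real (real (q * n) / real ((p + q) * n))"
  define f where "f = (\<lambda>\<mu>. cmod (\<mu> - c))"
  have ms: "sum_mset (image_mset g (mset xs)) = sum_list (map g xs)" for g :: "complex \<Rightarrow> real" and xs
    by (induction xs) auto
  have LE: "loop_energy (union_pG_qGl p q A) (q * n) = real p * (\<Sum>a\<leftarrow>as. f a) + real q * (\<Sum>a\<leftarrow>as. f (a + 1))"
    unfolding loop_energy_def dimM eM c_def[symmetric] f_def[symmetric] image_mset_union sum_mset.union sum_repeat ms
    by (simp add: o_def)
  have GE: "graph_energy A = (\<Sum>a\<leftarrow>as. cmod a)" unfolding graph_energy_def eig ms ..
  have pt: "real p * f a + real q * f (a + 1) = real (p + q) * cmod a" if a: "a \<in> set as" for a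
  proof -
    have n0: "n > 0" using a len by (cases n) auto
    have cq: "c = complex_of_real (real q / real (p + q))" unfolding c_def using n0 by simp
    define r where "r = Re a"
    have ar: "a = complex_of_real r" unfolding r_def using real[OF a] by (simp add: complex_eq_iff)
    have hyp: "\<bar>r\<bar> \<ge> max (real p / real (p + q)) (real q / real (p + q))"
      using assms(3) a unfolding eig ar by auto
    have "f a = cmod (complex_of_real (r - real q / real (p + q)))"
      unfolding f_def cq ar of_real_diff ..
    then have "f a = \<bar>r - real q / real (p + q)\<bar>" by (simp only: norm_of_real)
    moreover have "f (a + 1) = cmod (complex_of_real (r + 1 - real q / real (p + q)))"
      unfolding f_def cq ar of_real_diff of_real_add of_real_1 ..
    then have "f (a + 1) = \<bar>r + 1 - real q / real (p + q)\<bar>" by (simp only: norm_of_real)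
    moreover have "cmod a = \<bar>r\<bar>" unfolding ar by simp
    ultimately show ?thesis using key[OF assms(2) hyp] by simp
  qed
  have "real p * (\<Sum>a\<leftarrow>as. f a) + real q * (\<Sum>a\<leftarrow>as. f (a + 1)) = (\<Sum>a\<leftarrow>as. real p * f a + real q * f (a + 1))"
    by (simp add: sum_list_addf sum_list_const_mult)
  also have "\<dots> = (\<Sum>a\<leftarrow>as. real (p + q) * cmod a)"
    using pt by (intro arg_cong[where f=sum_list] map_cong) auto
  also have "\<dots> = real (p + q) * (\<Sum>a\<leftarrow>as. cmod a)" by (simp add: sum_list_const_mult)
  finally show ?thesis unfolding LE GE .
qed
end
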